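(* Let $\varepsilon>0$ and $n\in\mathbb{N}$. Then $$\mu_n\left(\left\{r\in Q_n:\sum_{k=0}^{n-1}p(r)_k\ge n\left(\tfrac12+\varepsilon\right)\right\}\right)\le e^{-2\varepsilon^2n}$$ and $$\mu_n\left(\left\{r\in Q_n:\sum_{k=0}^{n-1}p(r)_k\le n\left(\tfrac12-\varepsilon\right)\right\}\right)\le e^{-2\varepsilon^2n},$$ where the $p(r)_k\in\mathbb{F}_2$ are summed as integers $0$ or $1$.
   Context: $\mathbb{F}_2((x^{-1}))$ is the field of formal series $r=\sum_{z\in\mathbb{Z}}a_zx^z$, $a_z\in\mathbb{F}_2$, with $a_z\ne0$ for only finitely many positive $z$; $\deg(r)=\max\{z:a_z\ne0\}$. The polynomial part is $[r]=\sum_{z\ge0}a_zx^z$. $S(r)=\frac{r}{x+1}$ if $[r](1)=0$ and $S(r)=\frac{xr}{x+1}$ if $[r](1)=1$; $p(r)_k=[S^k(r)](1)$. $Q_n=\{r:\deg(r)=n\}$ and $\mu_n$ is the probability measure on $Q_n$ under which the coefficients $a_{n-1},a_{n-2},\dots$ are independent and uniform in $\mathbb{F}_2$. *)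

theory Defs
  imports "HOL-Probability.Probability" "HOL-Library.Z2"
    "HOL-Computational_Algebra.Formal_Laurent_Series"
begin

text \<open>F_2((x^-1)) is modelled as the library type of formal Laurent series
  bit fls in the variable y = x^-1 (finitely many negative powers of y
  = finitely many positive powers of x).\<close>

definition xvar :: "bit fls" where
  "xvar = fls_X_inv"

definition deg :: "bit fls \<Rightarrow> int" where
  "deg r = - fls_subdegree r"

text \<open>Polynomial part [r] = sum over z >= 0 of a_z x^z, as a polynomial in x:
  coefficient of x^z is r $$ (-z).\<close>
definition polypart :: "bit fls \<Rightarrow> bit poly" where
  "polypart r = fls_prpart r + [: fls_nth r 0 :]"

definition Smap :: "bit fls \<Rightarrow> bit fls" where
  "Smap r = (if poly (polypart r) 1 = 0 then r / (xvar + 1) else xvar * r / (xvar + 1))"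

definition pseq :: "bit fls \<Rightarrow> nat \<Rightarrow> bit" where
  "pseq r k = poly (polypart ((Smap ^^ k) r)) 1"

definition Q :: "nat \<Rightarrow> bit fls set" where
  "Q n = {r. r \<noteq> 0 \<and> deg r = int n}"

text \<open>Coin space: i.i.d. uniform coefficients a_{n-1}, a_{n-2}, ... ;
  omega i is the coefficient a_{n-1-i}.\<close>
definition coin_space :: "(nat \<Rightarrow> bit) measure" where
  "coin_space = PiM UNIV (\<lambda>_. measure_pmf (pmf_of_set {0, 1}))"

definition series_of :: "nat \<Rightarrow> (nat \<Rightarrow> bit) \<Rightarrow> bit fls" where
  "series_of n \<omega> =
     fls_shift (int n) (fps_to_fls (Abs_fps (\<lambda>i. if i = 0 then 1 else \<omega> (i - 1))))"

definition mu_event :: "nat \<Rightarrow> bit fls set \<Rightarrow> (nat \<Rightarrow> bit) set" where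
  "mu_event n A = {\<omega> \<in> space coin_space. series_of n \<omega> \<in> A}"

definition psum :: "bit fls \<Rightarrow> nat \<Rightarrow> nat" where
  "psum r n = (\<Sum>k<n. if pseq r k = 1 then 1 else 0)"

end

theory Submission
  imports Defs
begin

unbundle fps_syntax
no_notation vec_nth (infixl \<open>$\<close> 90)

definition Gs :: "bit fps" where "Gs = Abs_fps (\<lambda>_. 1)"

lemma bit_add_self [simp]: "(x::bit) + x = 0"
  by (cases x) simp_all

lemma Gs_inv: "Gs * (1 + fps_X) = 1"
proof (rule fps_ext)
  fix n show "(Gs * (1 + fps_X)) $ n = (1::bit fps) $ n"
    by (cases n) (simp_all add: Gs_def algebra_simps fps_mult_nth_1)
qed

lemma mult_Gs_nth: "(B * Gs) $ i = (\<Sum>j\<le>i. B $ j)"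
  by (simp only: fps_mult_nth Gs_def fps_nth_Abs_fps mult_1_right atLeast0AtMost)

definition evb :: "bit fps \<Rightarrow> int \<Rightarrow> bit" where
  "evb B N = (if N < 0 then 0 else (\<Sum>j\<le>nat N. B $ j))"

lemma coeff_polypart: "coeff (polypart f) z = f $$ (- int z)"
  by (simp add: polypart_def coeff_pCons' split: nat.split)

lemma poly_one_sum: "degree (p::bit poly) \<le> m \<Longrightarrow> poly p 1 = (\<Sum>z\<le>m. coeff p z)"
proof -
  assume d: "degree p \<le> m"
  have "poly p 1 = (\<Sum>z\<le>degree p. coeff p z)" by (simp only: poly_altdef power_one mult_1_right)
  also have "\<dots> = (\<Sum>z\<le>m. coeff p z)"
    by (rule sum.mono_neutral_left) (use d in \<open>auto simp: coeff_eq_0\<close>)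
  finally show ?thesis .
qed

lemma ev_shift: "poly (polypart (fls_shift N (fps_to_fls B))) 1 = evb B N"
proof (cases "N < 0")
  case True
  have "polypart (fls_shift N (fps_to_fls B)) = 0"
    by (rule poly_eqI) (use True in \<open>simp add: coeff_polypart\<close>)
  then show ?thesis using True by (simp add: evb_def)
next
  case False
  let ?p = "polypart (fls_shift N (fps_to_fls B))"
  have c: "coeff ?p z = (if z \<le> nat N then B $ (nat N - z) else 0)" for z
    using False by (auto simp: coeff_polypart nat_diff_distrib)
  have "degree ?p \<le> nat N"
    by (rule degree_le) (simp add: c)
  then have "poly ?p 1 = (\<Sum>z\<le>nat N. coeff ?p z)" by (rule poly_one_sum)
  also have "\<dots> = (\<Sum>z\<le>nat N. B $ (nat N - z))" by (simp add: c)
  also have "\<dots> = (\<Sum>j\<le>nat N. B $ j)"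
    by (rule sum.reindex_bij_witness[where i="\<lambda>j. nat N - j" and j="\<lambda>j. nat N - j"]) auto
  finally show ?thesis using False by (simp add: evb_def)
qed

lemma xvar_plus1: "xvar + 1 = fls_shift 1 (fps_to_fls (1 + fps_X))"
  by (rule fls_eqI) (auto simp: xvar_def)

lemma xvar_plus1_nz: "xvar + 1 \<noteq> 0"
proof
  assume "xvar + 1 = 0"
  then have "(xvar + 1) $$ 0 = 0" by simp
  then show False by (simp add: xvar_def)
qed

lemma Smap_shift:
  "Smap (fls_shift N (fps_to_fls B)) =
     fls_shift (if evb B N = 0 then N - 1 else N) (fps_to_fls (B * Gs))"
proof -
  let ?r = "fls_shift N (fps_to_fls B)"
  have key: "fps_to_fls (B * Gs) * fps_to_fls (1 + fps_X) = fps_to_fls B"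
    by (simp only: fls_times_fps_to_fls[symmetric] mult.assoc Gs_inv mult_1_right)
  have e1: "fls_shift (N - 1) (fps_to_fls (B * Gs)) * (xvar + 1) = ?r"
    unfolding xvar_plus1 fls_times_both_shifted_simp key by simp
  have e2: "fls_shift N (fps_to_fls (B * Gs)) * (xvar + 1) = xvar * ?r"
    unfolding xvar_plus1 fls_times_both_shifted_simp key
    by (simp add: xvar_def fls_X_inv_times_conv_shift)
  show ?thesis
  proof (cases "evb B N = 0")
    case True
    then show ?thesis
      unfolding Smap_def ev_shift using e1 xvar_plus1_nz
      by (metis nonzero_mult_div_cancel_right)
  next
    case False
    then show ?thesis
      unfolding Smap_def ev_shift using e2 xvar_plus1_nz
      by (metis nonzero_mult_div_cancel_right)
  qed
qed


fun Nst :: "bit fps \<Rightarrow> int \<Rightarrow> nat \<Rightarrow> int" where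
  "Nst A N 0 = N"
| "Nst A N (Suc k) = (if evb (A * Gs ^ k) (Nst A N k) = 0 then Nst A N k - 1 else Nst A N k)"

lemma Smap_iter:
  "(Smap ^^ k) (fls_shift N (fps_to_fls A)) = fls_shift (Nst A N k) (fps_to_fls (A * Gs ^ k))"
  by (induction k) (simp_all add: Smap_shift mult.assoc power_Suc2 del: power_Suc)

lemma pseq_shift: "pseq (fls_shift N (fps_to_fls A)) k = evb (A * Gs ^ k) (Nst A N k)"
  by (simp add: pseq_def Smap_iter ev_shift)

lemma Nst_le: "Nst A N k \<le> N"
  by (induction k) auto

lemma Nst_ge: "N - int k \<le> Nst A N k"
  by (induction k) auto

lemma coeff_dep:
  assumes "\<And>i. i \<le> m \<Longrightarrow> A $ i = A' $ i"
  shows "i \<le> m \<Longrightarrow> (A * Gs ^ k) $ i = (A' * Gs ^ k) $ i"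
proof (induction k arbitrary: i)
  case 0
  then show ?case using assms by simp
next
  case (Suc k)
  have "(A * Gs ^ Suc k) $ i = (\<Sum>j\<le>i. (A * Gs ^ k) $ j)"
    by (simp only: power_Suc2 mult.assoc[symmetric] mult_Gs_nth)
  also have "\<dots> = (\<Sum>j\<le>i. (A' * Gs ^ k) $ j)"
    by (rule sum.cong) (use Suc in auto)
  also have "\<dots> = (A' * Gs ^ Suc k) $ i"
    by (simp only: power_Suc2 mult.assoc[symmetric] mult_Gs_nth)
  finally show ?case .
qed

lemma evb_dep:
  assumes "\<And>i. i \<le> m \<Longrightarrow> A $ i = A' $ i" "N \<le> int m"
  shows "evb (A * Gs ^ k) N = evb (A' * Gs ^ k) N"
  unfolding evb_def using coeff_dep[OF assms(1)] assms(2)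
  by (auto intro!: sum.cong)

lemma Nst_dep:
  assumes "\<And>i. i \<le> m \<Longrightarrow> A $ i = A' $ i"
  shows "Nst A (int m) k = Nst A' (int m) k"
proof (induction k)
  case (Suc k)
  have "evb (A * Gs ^ k) (Nst A (int m) k) = evb (A' * Gs ^ k) (Nst A (int m) k)"
    by (rule evb_dep[OF assms Nst_le])
  then show ?case using Suc by simp
qed simp

lemma pseq_dep:
  assumes "\<And>i. i \<le> m \<Longrightarrow> A $ i = A' $ i"
  shows "pseq (fls_shift (int m) (fps_to_fls A)) k = pseq (fls_shift (int m) (fps_to_fls A')) k"
  using Nst_dep[where m=m and A=A and A'=A' and k=k, OF assms] evb_dep[OF assms Nst_le[of A' "int m" k], of k]
  by (simp add: pseq_shift)


lemma bit_sum0_iff: "(x::bit) + y = 0 \<longleftrightarrow> x = y"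
  by (cases x; cases y) simp_all

lemma sum_const_tail:
  fixes f :: "nat \<Rightarrow> bit"
  assumes "\<And>j. b < j \<Longrightarrow> j \<le> c \<Longrightarrow> f j = 0" "b \<le> a" "a \<le> c"
  shows "(\<Sum>j\<le>a. f j) = (\<Sum>j\<le>b. f j)"
  by (rule sum.mono_neutral_right) (use assms in auto)

lemma inj_main:
  fixes A A' :: "bit fps"
  assumes a0: "A $ 0 = A' $ 0"
    and p: "\<And>k. k < n \<Longrightarrow> evb (A * Gs ^ k) (Nst A (int n) k) = evb (A' * Gs ^ k) (Nst A' (int n) k)"
  shows "i \<le> n \<Longrightarrow> A $ i = A' $ i"
proof -
  have NN: "k \<le> n \<Longrightarrow> Nst A (int n) k = Nst A' (int n) k" for k
  proof (induction k)
    case (Suc k)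
    then show ?case using p[of k] by simp
  qed simp
  define D where "D = A + A'"
  have dk: "(D * Gs ^ k) $ i = (A * Gs ^ k) $ i + (A' * Gs ^ k) $ i" for k i
    by (simp add: D_def distrib_right)
  have step: "(D * Gs ^ Suc k) $ i = (\<Sum>j\<le>i. (D * Gs ^ k) $ j)" for k i
    by (simp only: power_Suc2 mult.assoc[symmetric] mult_Gs_nth)
  have C: "k \<le> n \<Longrightarrow> (i = 0 \<or> (n - k < i \<and> i \<le> n)) \<Longrightarrow> (D * Gs ^ k) $ i = 0" for k i
  proof (induction k arbitrary: i)
    case 0
    then show ?case using a0 by (auto simp: D_def bit_sum0_iff)
  next
    case (Suc k)
    have IH: "(D * Gs ^ k) $ j = 0" if "j = 0 \<or> (n - k < j \<and> j \<le> n)" for j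
      using Suc.IH[of j] Suc.prems that by simp
    define N where "N = Nst A (int n) k"
    have Nb: "int n - int k \<le> N" "N \<le> int n" using Nst_ge Nst_le unfolding N_def by auto
    have kn: "k < n" using Suc.prems by simp
    then have "N \<ge> 0" using Nb by simp
    define M where "M = nat N"
    have Mb: "n - k \<le> M" "M \<le> n" using Nb kn unfolding M_def by auto
    have "evb (A * Gs ^ k) N = evb (A' * Gs ^ k) N"
      using p[OF kn] NN[of k] kn unfolding N_def by simp
    then have E: "(\<Sum>j\<le>M. (A * Gs ^ k) $ j) = (\<Sum>j\<le>M. (A' * Gs ^ k) $ j)"
      using \<open>N \<ge> 0\<close> unfolding evb_def M_def by (simp del: add_bit_eq_xor)
    have S0: "(\<Sum>j\<le>M. (D * Gs ^ k) $ j) = 0"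
      by (simp only: dk sum.distrib E bit_add_self)
    have tail: "(\<Sum>j\<le>a. (D * Gs ^ k) $ j) = (\<Sum>j\<le>n - k. (D * Gs ^ k) $ j)"
      if "n - k \<le> a" "a \<le> n" for a
      by (rule sum_const_tail[where c=n]) (use that IH in auto)
    show ?case
    proof (cases "i = 0")
      case True
      then show ?thesis using step[of k 0] IH[of 0] by simp
    next
      case False
      then have "n - k \<le> i" "i \<le> n" using Suc.prems by auto
      then show ?thesis using step[of k i] tail[of i] tail[OF Mb] S0 by simp
    qed
  qed
  have Cn: "j \<le> n \<Longrightarrow> (D * Gs ^ n) $ j = 0" for j
    using C[of n j] by auto
  have "D = (D * Gs ^ n) * (1 + fps_X) ^ n"
    by (simp add: mult.assoc power_mult_distrib[symmetric] Gs_inv)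
  then have "D $ i = (\<Sum>j=0..i. (D * Gs ^ n) $ j * ((1 + fps_X) ^ n) $ (i - j))"
    by (metis fps_mult_nth)
  moreover assume "i \<le> n"
  ultimately have "D $ i = 0" using Cn by simp
  then show "A $ i = A' $ i" unfolding D_def fps_add_nth by (simp only: bit_sum0_iff)
qed


definition Aof :: "(nat \<Rightarrow> bit) \<Rightarrow> bit fps" where
  "Aof \<omega> = Abs_fps (\<lambda>i. if i = 0 then 1 else \<omega> (i - 1))"

lemma series_of_Aof: "series_of n \<omega> = fls_shift (int n) (fps_to_fls (Aof \<omega>))"
  by (simp add: series_of_def Aof_def)

definition Vs :: "nat \<Rightarrow> (nat \<Rightarrow> bit) set" where
  "Vs n = PiE {..<n} (\<lambda>_. UNIV)"

definition Fp :: "nat \<Rightarrow> (nat \<Rightarrow> bit) \<Rightarrow> (nat \<Rightarrow> bit)" where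
  "Fp n \<omega> = restrict (\<lambda>k. pseq (series_of n \<omega>) k) {..<n}"

definition cnt :: "nat \<Rightarrow> (nat \<Rightarrow> bit) \<Rightarrow> nat" where
  "cnt n u = (\<Sum>k<n. if u k = 1 then 1 else 0)"

lemma Fp_restrict: "Fp n \<omega> = Fp n (restrict \<omega> {..<n})"
proof -
  have "pseq (series_of n \<omega>) k = pseq (series_of n (restrict \<omega> {..<n})) k" for k
    unfolding series_of_Aof
  proof (rule pseq_dep)
    fix i assume "i \<le> n"
    then show "Aof \<omega> $ i = Aof (restrict \<omega> {..<n}) $ i"
      by (cases i) (simp_all add: Aof_def)
  qed
  then show ?thesis by (simp add: Fp_def)
qed

lemma Fp_in: "Fp n \<omega> \<in> Vs n"
  by (simp add: Fp_def Vs_def)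

lemma Fp_inj: "inj_on (Fp n) (Vs n)"
proof (rule inj_onI)
  fix v v' assume v: "v \<in> Vs n" and v': "v' \<in> Vs n" and eq: "Fp n v = Fp n v'"
  have ev: "evb (Aof v * Gs ^ k) (Nst (Aof v) (int n) k) = evb (Aof v' * Gs ^ k) (Nst (Aof v') (int n) k)"
    if "k < n" for k
  proof -
    have "Fp n v k = Fp n v' k" using eq by simp
    then have "pseq (series_of n v) k = pseq (series_of n v') k"
      using that unfolding Fp_def by simp
    then show ?thesis unfolding series_of_Aof pseq_shift .
  qed
  have a0: "Aof v $ 0 = Aof v' $ 0" by (simp add: Aof_def)
  have c: "Aof v $ i = Aof v' $ i" if "i \<le> n" for i
    by (rule inj_main[of "Aof v" "Aof v'" n, OF a0 ev that])
  show "v = v'"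
  proof (rule PiE_ext)
    show "v \<in> PiE {..<n} (\<lambda>_. UNIV)" "v' \<in> PiE {..<n} (\<lambda>_. UNIV)" using v v' by (simp_all add: Vs_def)
    fix j assume "j \<in> {..<n}"
    then have "Aof v $ Suc j = Aof v' $ Suc j" using c[of "Suc j"] by simp
    then show "v j = v' j" by (simp add: Aof_def)
  qed
qed

lemma bit_UNIV: "(UNIV :: bit set) = {0, 1}"
  using bit_not_zero_iff by blast

lemma finite_Vs: "finite (Vs n)"
  unfolding Vs_def by (rule finite_PiE) (simp_all add: bit_UNIV)

lemma Fp_image: "Fp n ` Vs n = Vs n"
  by (rule endo_inj_surj[OF finite_Vs _ Fp_inj]) (use Fp_in in blast)

lemma psum_Fp: "psum (series_of n \<omega>) n = cnt n (Fp n \<omega>)"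
  by (simp add: psum_def cnt_def Fp_def)

lemma series_in_Q: "series_of n \<omega> \<in> Q n"
proof -
  have A0: "Aof \<omega> $ 0 = 1" by (simp add: Aof_def)
  then have nz: "Aof \<omega> \<noteq> 0" by auto
  have "subdegree (Aof \<omega>) = 0" using A0 by (simp add: subdegree_eq_0_iff)
  then show ?thesis
    using nz by (simp add: Q_def deg_def series_of_Aof fls_shift_eq0_iff fls_subdegree_fls_to_fps)
qed


abbreviation MM :: "nat \<Rightarrow> bit measure" where
  "MM \<equiv> (\<lambda>_. measure_pmf (pmf_of_set {0, 1}))"

lemma coin_space_MM: "coin_space = PiM UNIV MM"
  by (simp add: coin_space_def)

lemma space_coin: "space coin_space = UNIV"
  by (simp add: coin_space_def space_PiM)

interpretation PP: product_prob_space MM "UNIV :: nat set"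
  by (rule product_prob_spaceI) (rule prob_space_measure_pmf)

lemma event_eq:
  "mu_event n {r \<in> Q n. P (psum r n)} = prod_emb UNIV MM {..<n} {v \<in> Vs n. P (cnt n (Fp n v))}"
proof -
  have "restrict \<omega> {..<n} \<in> Vs n" for \<omega> by (simp add: Vs_def)
  then show ?thesis
    unfolding mu_event_def prod_emb_def space_coin
    using series_in_Q psum_Fp Fp_restrict by (auto simp: space_PiM)
qed

lemma pmf_half: "pmf (pmf_of_set {0, 1::bit}) b = 1/2"
proof -
  have "b \<in> {0, 1}" using bit_UNIV by auto
  then show ?thesis by simp
qed

lemma singleton_sets:
  assumes "v \<in> Vs n"
  shows "{v} \<in> sets (PiM {..<n} MM)" "emeasure (PiM {..<n} MM) {v} = ennreal ((1/2) ^ n)"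
proof -
  have e: "{v} = PiE {..<n} (\<lambda>i. {v i})"
    using assms by (simp add: Vs_def PiE_singleton PiE_iff)
  show "{v} \<in> sets (PiM {..<n} MM)"
    unfolding e by (rule sets_PiM_I_finite) auto
  have "emeasure (PiM {..<n} MM) {v} = (\<Prod>i<n. emeasure (MM i) {v i})"
    unfolding e by (rule PP.emeasure_PiM) auto
  also have "\<dots> = (\<Prod>i<n. ennreal (1/2))"
    by (simp only: emeasure_pmf_single pmf_half)
  also have "\<dots> = ennreal (1/2) ^ n"
    by simp
  also have "\<dots> = ennreal ((1/2) ^ n)"
    by (rule ennreal_power) simp
  finally show "emeasure (PiM {..<n} MM) {v} = ennreal ((1/2) ^ n)" .
qed

lemma fin_sets:
  assumes "B \<subseteq> Vs n"
  shows "B \<in> sets (PiM {..<n} MM)" "emeasure (PiM {..<n} MM) B = ennreal (real (card B) * (1/2) ^ n)"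
proof -
  have fB: "finite B" using assms finite_Vs finite_subset by blast
  have "B = (\<Union>v\<in>B. {v})" by blast
  also have "\<dots> \<in> sets (PiM {..<n} MM)"
    using fB singleton_sets assms by (intro sets.finite_UN) auto
  finally show "B \<in> sets (PiM {..<n} MM)" .
  have "emeasure (PiM {..<n} MM) B = (\<Sum>v\<in>B. emeasure (PiM {..<n} MM) {v})"
    using fB singleton_sets assms by (intro emeasure_eq_sum_singleton) auto
  also have "\<dots> = (\<Sum>v\<in>B. ennreal ((1/2) ^ n))"
    using singleton_sets assms by (intro sum.cong) auto
  also have "\<dots> = ennreal (\<Sum>v\<in>B. (1/2) ^ n)"
    by (rule sum_ennreal) simp
  also have "\<dots> = ennreal (real (card B) * (1/2) ^ n)" by simp
  finally show "emeasure (PiM {..<n} MM) B = ennreal (real (card B) * (1/2) ^ n)" .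
qed

lemma coin_measure:
  assumes "B \<subseteq> Vs n"
  shows "prod_emb UNIV MM {..<n} B \<in> sets coin_space"
    "measure coin_space (prod_emb UNIV MM {..<n} B) = real (card B) / 2 ^ n"
proof -
  show "prod_emb UNIV MM {..<n} B \<in> sets coin_space"
    unfolding coin_space_MM using fin_sets(1)[OF assms] by (intro measurable_prod_emb) auto
  have "emeasure coin_space (prod_emb UNIV MM {..<n} B) = emeasure (PiM {..<n} MM) B"
    unfolding coin_space_MM using fin_sets(1)[OF assms] by (intro PP.emeasure_PiM_emb') auto
  also have "\<dots> = ennreal (real (card B) * (1/2) ^ n)"
    using fin_sets(2)[OF assms] .
  finally have "measure coin_space (prod_emb UNIV MM {..<n} B) = real (card B) * (1/2) ^ n"
    by (simp add: measure_def)
  then show "measure coin_space (prod_emb UNIV MM {..<n} B) = real (card B) / 2 ^ n"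
    by (simp add: power_divide)
qed


lemma card_B: "card {v \<in> Vs n. P (cnt n (Fp n v))} = card {u \<in> Vs n. P (cnt n u)}"
proof (rule bij_betw_same_card)
  show "bij_betw (Fp n) {v \<in> Vs n. P (cnt n (Fp n v))} {u \<in> Vs n. P (cnt n u)}"
    unfolding bij_betw_def
  proof
    show "inj_on (Fp n) {v \<in> Vs n. P (cnt n (Fp n v))}"
      using Fp_inj by (rule inj_on_subset) auto
    show "Fp n ` {v \<in> Vs n. P (cnt n (Fp n v))} = {u \<in> Vs n. P (cnt n u)}"
    proof
      show "Fp n ` {v \<in> Vs n. P (cnt n (Fp n v))} \<subseteq> {u \<in> Vs n. P (cnt n u)}"
        using Fp_in by auto
      show "{u \<in> Vs n. P (cnt n u)} \<subseteq> Fp n ` {v \<in> Vs n. P (cnt n (Fp n v))}"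
      proof
        fix u assume u: "u \<in> {u \<in> Vs n. P (cnt n u)}"
        then obtain v where "v \<in> Vs n" "u = Fp n v" using Fp_image by blast
        then show "u \<in> Fp n ` {v \<in> Vs n. P (cnt n (Fp n v))}" using u by auto
      qed
    qed
  qed
qed

lemma cnt_card: "cnt n u = card {i \<in> {..<n}. u i = 1}"
proof -
  have "card {i \<in> {..<n}. u i = 1} = (\<Sum>i\<in>{i \<in> {..<n}. u i = 1}. (1::nat))" by simp
  also have "\<dots> = (\<Sum>i<n. if u i = 1 then 1 else 0)"
    by (rule sum.inter_filter) simp
  finally show ?thesis by (simp add: cnt_def)
qed

lemma card_PowB: "card {u \<in> Vs n. P (cnt n u)} = card {T \<in> Pow {..<n}. P (card T)}"
proof (rule bij_betw_same_card)
  let ?f = "\<lambda>u. {i \<in> {..<n}. u i = 1}"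
  let ?g = "\<lambda>T. restrict (\<lambda>i. if i \<in> T then (1::bit) else 0) {..<n}"
  show "bij_betw ?f {u \<in> Vs n. P (cnt n u)} {T \<in> Pow {..<n}. P (card T)}"
  proof (rule bij_betw_byWitness[where f'="?g"])
    show "\<forall>a\<in>{u \<in> Vs n. P (cnt n u)}. ?g (?f a) = a"
    proof
      fix a assume a: "a \<in> {u \<in> Vs n. P (cnt n u)}"
      show "?g (?f a) = a"
      proof
        fix i show "?g (?f a) i = a i"
          using a bit_not_zero_iff by (cases "i < n") (auto simp: Vs_def PiE_def extensional_def)
      qed
    qed
    show "\<forall>a'\<in>{T \<in> Pow {..<n}. P (card T)}. ?f (?g a') = a'"
      by auto
    show "?f ` {u \<in> Vs n. P (cnt n u)} \<subseteq> {T \<in> Pow {..<n}. P (card T)}"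
      by (auto simp: cnt_card)
    show "?g ` {T \<in> Pow {..<n}. P (card T)} \<subseteq> {u \<in> Vs n. P (cnt n u)}"
    proof
      fix u assume "u \<in> ?g ` {T \<in> Pow {..<n}. P (card T)}"
      then obtain T where T: "T \<subseteq> {..<n}" "P (card T)" "u = ?g T" by auto
      have "{i \<in> {..<n}. u i = 1} = T" using T by auto
      then have "cnt n u = card T" by (simp add: cnt_card)
      then show "u \<in> {u \<in> Vs n. P (cnt n u)}" using T by (simp add: Vs_def)
    qed
  qed
qed

lemma binom_prob:
  "measure_pmf.prob (binomial_pmf n (1/2)) {x. P x} = real (card {T \<in> Pow {..<n}. P (card T)}) / 2 ^ n"
proof -
  have "binomial_pmf n (1/2) = map_pmf (\<lambda>f. card {x \<in> {..<n}. f x}) (Pi_pmf {..<n} False (\<lambda>_. bernoulli_pmf (1/2)))"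
    by (rule binomial_pmf_altdef') auto
  also have "\<dots> = map_pmf card (map_pmf (\<lambda>b. {x \<in> {..<n}. b x}) (Pi_pmf {..<n} False (\<lambda>_. bernoulli_pmf (1/2))))"
    by (simp add: map_pmf_comp)
  also have "\<dots> = map_pmf card (pmf_of_set (Pow {..<n}))"
    by (simp only: pmf_of_set_Pow_conv_bernoulli[OF finite_lessThan])
  finally have e: "binomial_pmf n (1/2) = map_pmf card (pmf_of_set (Pow {..<n}))" .
  have "measure_pmf.prob (binomial_pmf n (1/2)) {x. P x} = measure_pmf.prob (pmf_of_set (Pow {..<n})) (card -` {x. P x})"
    by (simp add: e)
  also have "\<dots> = real (card (Pow {..<n} \<inter> card -` {x. P x})) / real (card (Pow {..<n}))"
    by (rule measure_pmf_of_set) auto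
  also have "Pow {..<n} \<inter> card -` {x. P x} = {T \<in> Pow {..<n}. P (card T)}" by auto
  also have "real (card (Pow {..<n})) = 2 ^ n" by (simp add: card_Pow)
  finally show ?thesis .
qed

lemma main_eq:
  "mu_event n {r \<in> Q n. P (psum r n)} \<in> sets coin_space \<and>
   measure coin_space (mu_event n {r \<in> Q n. P (psum r n)}) = measure_pmf.prob (binomial_pmf n (1/2)) {x. P x}"
proof -
  have sub: "{v \<in> Vs n. P (cnt n (Fp n v))} \<subseteq> Vs n" by auto
  show ?thesis
    unfolding event_eq binom_prob
    using coin_measure[OF sub] card_B[where P=P and n=n] card_PowB[where P=P and n=n] by simp
qed


lemma bd_half: "binomial_distribution (1/2)"
  by unfold_locales simp

theorem lemma2p11:
  fixes \<epsilon> :: real and n :: nat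
  assumes "\<epsilon> > 0"
  shows "mu_event n {r \<in> Q n. real (psum r n) \<ge> real n * (1/2 + \<epsilon>)} \<in> sets coin_space
       \<and> measure coin_space (mu_event n {r \<in> Q n. real (psum r n) \<ge> real n * (1/2 + \<epsilon>)})
           \<le> exp (- 2 * \<epsilon>^2 * real n)
       \<and> mu_event n {r \<in> Q n. real (psum r n) \<le> real n * (1/2 - \<epsilon>)} \<in> sets coin_space
       \<and> measure coin_space (mu_event n {r \<in> Q n. real (psum r n) \<le> real n * (1/2 - \<epsilon>)})
           \<le> exp (- 2 * \<epsilon>^2 * real n)"
proof -
  let ?P1 = "\<lambda>x::nat. real x \<ge> real n * (1/2 + \<epsilon>)"
  let ?P2 = "\<lambda>x::nat. real x \<le> real n * (1/2 - \<epsilon>)"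
  have m1: "mu_event n {r \<in> Q n. ?P1 (psum r n)} \<in> sets coin_space \<and>
     measure coin_space (mu_event n {r \<in> Q n. ?P1 (psum r n)}) = measure_pmf.prob (binomial_pmf n (1/2)) {x. ?P1 x}"
    by (rule main_eq)
  have m2: "mu_event n {r \<in> Q n. ?P2 (psum r n)} \<in> sets coin_space \<and>
     measure coin_space (mu_event n {r \<in> Q n. ?P2 (psum r n)}) = measure_pmf.prob (binomial_pmf n (1/2)) {x. ?P2 x}"
    by (rule main_eq)
  have b1: "measure_pmf.prob (binomial_pmf n (1/2)) {x. ?P1 x} \<le> exp (- 2 * \<epsilon>^2 * real n)"
    and b2: "measure_pmf.prob (binomial_pmf n (1/2)) {x. ?P2 x} \<le> exp (- 2 * \<epsilon>^2 * real n)"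
  proof -
    have "measure_pmf.prob (binomial_pmf n (1/2)) {x. ?P1 x} \<le> exp (- 2 * \<epsilon>^2 * real n) \<and>
          measure_pmf.prob (binomial_pmf n (1/2)) {x. ?P2 x} \<le> exp (- 2 * \<epsilon>^2 * real n)"
    proof (cases "n = 0")
      case True
      then show ?thesis using measure_pmf.prob_le_1 by simp
    next
      case False
      then have np: "0 < n" by simp
      have s1: "{x. ?P1 x} = {x. 1/2 + \<epsilon> \<le> real x / real n}"
        using np by (auto simp: field_simps)
      have s2: "{x. ?P2 x} = {x. real x / real n \<le> 1/2 - \<epsilon>}"
        using np by (auto simp: field_simps)
      have ex: "exp (real_of_int (- 2 * int n) * \<epsilon>\<^sup>2) = exp (- 2 * \<epsilon>^2 * real n)"
        by simp
      show ?thesis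
        using binomial_distribution.prob_ge'[OF bd_half np, of \<epsilon>]
          binomial_distribution.prob_le'[OF bd_half np, of \<epsilon>] assms
        unfolding s1 s2 ex by simp
    qed
    then show "measure_pmf.prob (binomial_pmf n (1/2)) {x. ?P1 x} \<le> exp (- 2 * \<epsilon>^2 * real n)"
      and "measure_pmf.prob (binomial_pmf n (1/2)) {x. ?P2 x} \<le> exp (- 2 * \<epsilon>^2 * real n)"
      by auto
  qed
  show ?thesis using m1 m2 b1 b2 by simp
qed

end
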